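(* Let $\delta\in(0,1)$, $\epsilon>0$, $\gamma^*\ge0$, and consider the progressive sampling algorithm PS-REG+ (described in the context) run on a simulation-based game with these parameters. If PS-REG+ returns an empirical utility function $\hat u$, then with probability at least $1-\delta$ it holds that $E(u)\subseteq E_{2\epsilon}(\hat u)$ and $E_\gamma(\hat u)\subseteq E_{2\epsilon+\gamma}(u)$ for all $0\le\gamma\le\gamma^*$, where $u$ is the true utility function.
   Context: Games. A normal-form game has a finite set of players $P$, finite pure strategy sets $S_p$, pure profile space $\mathbf{S}=\prod_pS_p$ and utility $u:\mathbf{S}\to\mathbb{R}^{|P|}$. For a profile $s$ and player $p$, $A_{p,s}$ is the set of pure profiles obtained from $s$ by replacing $p$'s strategy by any $t\in S_p$. $\mathrm{Reg}_p(s;u)=\sup_{s'\in A_{p,s}}u_p(s')-u_p(s)$, $\mathrm{Reg}(s;u)=\max_p\mathrm{Reg}_p(s;u)$; $E_\gamma(u)=\{s\in\mathbf{S}:\mathrm{Reg}(s;u)\le\gamma\}$, $E(u)=E_0(u)$. Simulation-based game: a simulator which, queried at a pure profile $s$, returns an independent random utility vector with coordinates in $[a_s,b_s]$; $c=\sup_s(b_s-a_s)$; the true utility $u(s)$ is the expected simulator output. Index set $\mathcal{I}=P\times\mathbf{S}$. Progressive sampling algorithm: schedule $m_1,\dots,m_T$, $M_t=m_1+\dots+m_t$. All indices start active. At iteration $t$, for each active $(p,s)$, draw $m_t$ fresh samples of $p$'s utility at $s$, let $\hat u^{(t)}_p(s)$ be the mean of all $M_t$ samples, and compute a (non-uniform,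 index-specific) deviation bound $\hat\epsilon^{(t)}_p(s)$ with $|u_p(s)-\hat u^{(t)}_p(s)|\le\hat\epsilon^{(t)}_p(s)$ with probability at least $1-\delta/(|\mathcal{I}|T)$. Pruned indices are no longer sampled and retain their last values of $\hat u^{(t)}$ and $\hat\epsilon^{(t)}$. After pruning, if no index is active the algorithm returns $\hat u=\hat u^{(t)}$; if the schedule is exhausted with active indices it returns nothing. Define the regret lower bound $\mathrm{Reg}^\downarrow_p(s;\hat u^{(t)})=\sup_{s'\in A_{p,s}}\big(\hat u^{(t)}_p(s')-\hat\epsilon^{(t)}_p(s')\big)-\big(\hat u^{(t)}_p(s)+\hat\epsilon^{(t)}_p(s)\big)$. PS-REG+ prunes an active index $(p,s)$ at iteration $t$ if $\hat\epsilon^{(t)}_p(s)\le\epsilon$ (well-estimated pruning) or if $\mathrm{Reg}^\downarrow_p(s;\hat u^{(t)})>\max\{0,\ \gamma^*+\epsilon-\hat\epsilon^{(t)}_p(s)\}$ (regret pruning). *)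

theory Defs
  imports "HOL-Probability.Probability"
begin

text \<open>Normal-form games. Players form a finite type 'p; player p has strategy set S p.
  A utility function is u :: 'p => ('p => 's) => real, u p s = utility of player p at profile s.\<close>

definition profiles :: "('p::finite \<Rightarrow> 's set) \<Rightarrow> ('p \<Rightarrow> 's) set" where
  "profiles S = PiE UNIV S"

definition indices :: "('p::finite \<Rightarrow> 's set) \<Rightarrow> ('p \<times> ('p \<Rightarrow> 's)) set" where
  "indices S = UNIV \<times> profiles S"

definition dev :: "('p \<Rightarrow> 's set) \<Rightarrow> 'p \<Rightarrow> ('p \<Rightarrow> 's) \<Rightarrow> ('p \<Rightarrow> 's) set" where
  "dev S p s = (\<lambda>t. s(p := t)) ` S p"

definition reg_p :: "('p \<Rightarrow> 's set) \<Rightarrow> ('p \<Rightarrow> ('p \<Rightarrow> 's) \<Rightarrow> real) \<Rightarrow> 'p \<Rightarrow> ('p \<Rightarrow> 's) \<Rightarrow> real" where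
  "reg_p S u p s = Sup ((\<lambda>s'. u p s') ` dev S p s) - u p s"

definition reg :: "('p::finite \<Rightarrow> 's set) \<Rightarrow> ('p \<Rightarrow> ('p \<Rightarrow> 's) \<Rightarrow> real) \<Rightarrow> ('p \<Rightarrow> 's) \<Rightarrow> real" where
  "reg S u s = Max ((\<lambda>p. reg_p S u p s) ` UNIV)"

definition eqs :: "('p::finite \<Rightarrow> 's set) \<Rightarrow> real \<Rightarrow> ('p \<Rightarrow> ('p \<Rightarrow> 's) \<Rightarrow> real) \<Rightarrow> ('p \<Rightarrow> 's) set" where
  "eqs S \<gamma> u = {s \<in> profiles S. reg S u s \<le> \<gamma>}"

definition reg_lb :: "('p \<Rightarrow> 's set) \<Rightarrow> ('p \<Rightarrow> ('p \<Rightarrow> 's) \<Rightarrow> real) \<Rightarrow> ('p \<Rightarrow> ('p \<Rightarrow> 's) \<Rightarrow> real)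
    \<Rightarrow> 'p \<Rightarrow> ('p \<Rightarrow> 's) \<Rightarrow> real" where
  "reg_lb S uh eh p s = Sup ((\<lambda>s'. uh p s' - eh p s') ` dev S p s) - (uh p s + eh p s)"

text \<open>State of PS-REG+ after iteration t: (active indices, current estimates, current bounds).
  U t p s / Eb t p s are the estimate and deviation bound that would be computed at iteration t
  (from the first M_t samples of index (p,s)); they are only used for indices active at iteration t,
  pruned indices retain their last values.\<close>
primrec psreg_state ::
  "('p::finite \<Rightarrow> 's set) \<Rightarrow> real \<Rightarrow> real \<Rightarrow>
   (nat \<Rightarrow> 'p \<Rightarrow> ('p \<Rightarrow> 's) \<Rightarrow> real) \<Rightarrow> (nat \<Rightarrow> 'p \<Rightarrow> ('p \<Rightarrow> 's) \<Rightarrow> real) \<Rightarrow> nat \<Rightarrow>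
   ('p \<times> ('p \<Rightarrow> 's)) set \<times> ('p \<Rightarrow> ('p \<Rightarrow> 's) \<Rightarrow> real) \<times> ('p \<Rightarrow> ('p \<Rightarrow> 's) \<Rightarrow> real)" where
  "psreg_state S \<epsilon> gstar U Eb 0 = (indices S, \<lambda>p s. 0, \<lambda>p s. 0)"
| "psreg_state S \<epsilon> gstar U Eb (Suc t) =
     (let (A, uh, eh) = psreg_state S \<epsilon> gstar U Eb t;
          uh' = (\<lambda>p s. if (p, s) \<in> A then U (Suc t) p s else uh p s);
          eh' = (\<lambda>p s. if (p, s) \<in> A then Eb (Suc t) p s else eh p s);
          pruned = {(p, s) \<in> A. eh' p s \<le> \<epsilon> \<or>
                       reg_lb S uh' eh' p s > max 0 (gstar + \<epsilon> - eh' p s)}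
      in (A - pruned, uh', eh'))"

definition psreg_plus ::
  "('p::finite \<Rightarrow> 's set) \<Rightarrow> real \<Rightarrow> real \<Rightarrow> nat \<Rightarrow>
   (nat \<Rightarrow> 'p \<Rightarrow> ('p \<Rightarrow> 's) \<Rightarrow> real) \<Rightarrow> (nat \<Rightarrow> 'p \<Rightarrow> ('p \<Rightarrow> 's) \<Rightarrow> real) \<Rightarrow>
   ('p \<Rightarrow> ('p \<Rightarrow> 's) \<Rightarrow> real) option" where
  "psreg_plus S \<epsilon> gstar T U Eb =
     (if \<exists>t\<in>{1..T}. fst (psreg_state S \<epsilon> gstar U Eb t) = {}
      then Some (fst (snd (psreg_state S \<epsilon> gstar U Eb
                  (LEAST t. 1 \<le> t \<and> fst (psreg_state S \<epsilon> gstar U Eb t) = {}))))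
      else None)"

definition Msched :: "(nat \<Rightarrow> nat) \<Rightarrow> nat \<Rightarrow> nat" where
  "Msched m t = (\<Sum>j=1..t. m j)"

end

theory Submission
  imports Defs
begin

definition Mx :: "('p \<Rightarrow> 's set) \<Rightarrow> ('p \<Rightarrow> ('p \<Rightarrow> 's) \<Rightarrow> real) \<Rightarrow> 'p \<Rightarrow> ('p \<Rightarrow> 's) \<Rightarrow> real" where
  "Mx S u p s = Max ((u p) ` dev S p s)"

lemma dev_row: "s' \<in> dev S p s \<Longrightarrow> dev S p s' = dev S p s"
  unfolding dev_def by (auto simp: image_iff)

lemma dev_sub: "s \<in> profiles S \<Longrightarrow> dev S p s \<subseteq> profiles S"
  unfolding dev_def profiles_def by (auto simp: PiE_iff)

lemma self_in_dev: "s \<in> profiles S \<Longrightarrow> s \<in> dev S p s"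
  unfolding dev_def profiles_def
  by (rule image_eqI[where x="s p"]) (auto simp: PiE_iff)

lemma dev_fin: "finite (S p) \<Longrightarrow> finite (dev S p s)"
  unfolding dev_def by simp

lemma dev_ne: "S p \<noteq> {} \<Longrightarrow> dev S p s \<noteq> {}"
  unfolding dev_def by simp

lemma reg_le_iff:
  fixes S :: "'p::finite \<Rightarrow> 's set"
  assumes fin: "\<And>p. finite (S p)" and ne: "\<And>p. S p \<noteq> {}"
  shows "reg S u s \<le> g \<longleftrightarrow> (\<forall>p. \<forall>s'\<in>dev S p s. u p s' - u p s \<le> g)"
proof -
  have rp: "reg_p S u p s \<le> g \<longleftrightarrow> (\<forall>s'\<in>dev S p s. u p s' - u p s \<le> g)" for p
  proof -
    have "reg_p S u p s \<le> g \<longleftrightarrow> Sup ((u p) ` dev S p s) \<le> g + u p s"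
      unfolding reg_p_def by linarith
    also have "\<dots> \<longleftrightarrow> (\<forall>s'\<in>dev S p s. u p s' \<le> g + u p s)"
      using dev_fin[of S p s, OF fin[of p]] dev_ne[of S p s, OF ne[of p]]
      by (subst cSup_le_iff) (auto intro: bdd_above_finite)
    finally show ?thesis by (simp add: diff_le_eq add.commute)
  qed
  have "reg S u s \<le> g \<longleftrightarrow> (\<forall>p. reg_p S u p s \<le> g)"
    unfolding reg_def by (subst Max_le_iff) auto
  then show ?thesis using rp by auto
qed

definition goodidx where
  "goodidx S u \<epsilon> g uh eh p s \<longleftrightarrow> \<bar>u p s - uh p s\<bar> \<le> eh p s \<and>
     (eh p s \<le> \<epsilon> \<or> (Mx S u p s > u p s \<and> uh p s < Mx S u p s - g - \<epsilon>))"

lemma psreg_inv: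
  fixes S :: "'p::finite \<Rightarrow> 's set"
  assumes fin: "\<And>p. finite (S p)" and ne: "\<And>p. S p \<noteq> {}"
    and good: "\<And>t p s. 1 \<le> t \<Longrightarrow> t \<le> T \<Longrightarrow> s \<in> profiles S \<Longrightarrow> \<bar>u p s - U t p s\<bar> \<le> E t p s"
  shows "t \<le> T \<Longrightarrow> s \<in> profiles S \<Longrightarrow> (p, s) \<notin> fst (psreg_state S \<epsilon> g U E t) \<Longrightarrow>
     goodidx S u \<epsilon> g (fst (snd (psreg_state S \<epsilon> g U E t))) (snd (snd (psreg_state S \<epsilon> g U E t))) p s"
proof (induction t arbitrary: p s)
  case 0
  then show ?case by (simp add: indices_def)
next
  case (Suc t)
  obtain A uh eh where st: "psreg_state S \<epsilon> g U E t = (A, uh, eh)" by (metis prod_cases3)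
  define uh' where "uh' = (\<lambda>p s. if (p, s) \<in> A then U (Suc t) p s else uh p s)"
  define eh' where "eh' = (\<lambda>p s. if (p, s) \<in> A then E (Suc t) p s else eh p s)"
  define pr where "pr = {(p, s) \<in> A. eh' p s \<le> \<epsilon> \<or>
                       reg_lb S uh' eh' p s > max 0 (g + \<epsilon> - eh' p s)}"
  have st': "psreg_state S \<epsilon> g U E (Suc t) = (A - pr, uh', eh')"
    by (simp add: st uh'_def eh'_def pr_def Let_def)
  have IH: "\<And>p s. s \<in> profiles S \<Longrightarrow> (p, s) \<notin> A \<Longrightarrow> goodidx S u \<epsilon> g uh eh p s"
    using Suc.IH Suc.prems(1) st by fastforce
  have gd: "\<bar>u q s' - uh' q s'\<bar> \<le> eh' q s'" if "s' \<in> profiles S" for q s'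
    using IH[OF that, of q] good[of "Suc t" s' q] Suc.prems(1) that
    unfolding uh'_def eh'_def goodidx_def by auto
  have "(p, s) \<notin> A - pr" using Suc.prems st' by simp
  then consider "(p, s) \<notin> A" | "(p, s) \<in> pr" by blast
  then show ?case
  proof cases
    case 1
    then show ?thesis using IH[OF Suc.prems(2) 1] st'
      by (simp add: uh'_def eh'_def goodidx_def)
  next
    case 2
    have fd: "finite (dev S p s)" "dev S p s \<noteq> {}" using dev_fin[of S p s, OF fin[of p]] dev_ne[of S p s, OF ne[of p]] by auto
    have supl: "Sup ((\<lambda>s'. uh' p s' - eh' p s') ` dev S p s) \<le> Mx S u p s"
    proof (rule cSup_least)
      show "(\<lambda>s'. uh' p s' - eh' p s') ` dev S p s \<noteq> {}" using fd by simp
    next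
      fix x assume "x \<in> (\<lambda>s'. uh' p s' - eh' p s') ` dev S p s"
      then obtain s' where s': "s' \<in> dev S p s" "x = uh' p s' - eh' p s'" by auto
      have "s' \<in> profiles S" using dev_sub[OF Suc.prems(2)] s' by auto
      then have "x \<le> u p s'" using gd[of s' p] s' by auto
      also have "u p s' \<le> Mx S u p s" unfolding Mx_def using fd s' by auto
      finally show "x \<le> Mx S u p s" .
    qed
    have "eh' p s \<le> \<epsilon> \<or> reg_lb S uh' eh' p s > max 0 (g + \<epsilon> - eh' p s)"
      using 2 pr_def by auto
    then have "goodidx S u \<epsilon> g uh' eh' p s"
      using gd[OF Suc.prems(2), of p] supl unfolding goodidx_def reg_lb_def by auto
    then show ?thesis using st' by simp
  qed
qed

lemma final_det:
  fixes S :: "'p::finite \<Rightarrow> 's set"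
  assumes fin: "\<And>p. finite (S p)" and ne: "\<And>p. S p \<noteq> {}"
    and gi: "\<And>p s. s \<in> profiles S \<Longrightarrow> goodidx S u \<epsilon> g uh eh p s" and g0: "0 \<le> g" and e0: "0 \<le> \<epsilon>"
  shows "eqs S 0 u \<subseteq> eqs S (2 * \<epsilon>) uh \<and>
         (\<forall>\<gamma>. 0 \<le> \<gamma> \<and> \<gamma> \<le> g \<longrightarrow> eqs S \<gamma> uh \<subseteq> eqs S (2 * \<epsilon> + \<gamma>) u)"
proof -
  have fd: "finite (dev S p s)" "dev S p s \<noteq> {}" for p s
    using dev_fin[of S p s, OF fin[of p]] dev_ne[of S p s, OF ne[of p]] by auto
  have mxge: "u p s' \<le> Mx S u p s" if "s' \<in> dev S p s" for p s s'
    unfolding Mx_def using fd that by auto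
  have mxin: "\<exists>sm\<in>dev S p s. u p sm = Mx S u p s" for p s
    unfolding Mx_def using Max_in[OF finite_imageI[OF fd(1)], of "u p" p s] fd(2) by auto
  have mxrow: "Mx S u p s' = Mx S u p s" if "s' \<in> dev S p s" for p s s'
    unfolding Mx_def using dev_row[OF that] by simp
  have G: "\<And>p s. s \<in> profiles S \<Longrightarrow> \<bar>u p s - uh p s\<bar> \<le> eh p s \<and>
     (eh p s \<le> \<epsilon> \<or> (Mx S u p s > u p s \<and> uh p s < Mx S u p s - g - \<epsilon>))"
    using gi unfolding goodidx_def by blast
  have part1: "eqs S 0 u \<subseteq> eqs S (2 * \<epsilon>) uh"
  proof
    fix s assume "s \<in> eqs S 0 u"
    then have sp: "s \<in> profiles S" and nash: "\<And>p s'. s' \<in> dev S p s \<Longrightarrow> u p s' - u p s \<le> 0"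
      unfolding eqs_def using reg_le_iff[of S, OF fin ne] by auto
    have "uh p s' - uh p s \<le> 2 * \<epsilon>" if s': "s' \<in> dev S p s" for p s'
    proof -
      have mx: "Mx S u p s = u p s"
      proof -
        obtain sm where "sm \<in> dev S p s" "u p sm = Mx S u p s" using mxin[of p s] by blast
        then have "Mx S u p s \<le> u p s" using nash[of sm p] by simp
        then show ?thesis using mxge[OF self_in_dev[OF sp], of p] by simp
      qed
      have s'p: "s' \<in> profiles S" using dev_sub[OF sp] s' by auto
      have hs: "uh p s \<ge> u p s - \<epsilon>" using G[OF sp, of p] mx by auto
      show ?thesis
        using G[OF s'p, of p] mxrow[OF s'] mx hs nash[OF s'] g0 e0 by auto
    qed
    then show "s \<in> eqs S (2 * \<epsilon>) uh"
      unfolding eqs_def using sp reg_le_iff[of S, OF fin ne] by auto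
  qed
  have part2: "eqs S \<gamma> uh \<subseteq> eqs S (2 * \<epsilon> + \<gamma>) u" if gam: "0 \<le> \<gamma>" "\<gamma> \<le> g" for \<gamma>
  proof
    fix s assume "s \<in> eqs S \<gamma> uh"
    then have sp: "s \<in> profiles S" and rg: "\<And>p s'. s' \<in> dev S p s \<Longrightarrow> uh p s' - uh p s \<le> \<gamma>"
      unfolding eqs_def using reg_le_iff[of S, OF fin ne] by auto
    have "u p s' - u p s \<le> 2 * \<epsilon> + \<gamma>" if s': "s' \<in> dev S p s" for p s'
    proof -
      obtain sm where sm: "sm \<in> dev S p s" "u p sm = Mx S u p s" using mxin by blast
      have smp: "sm \<in> profiles S" using dev_sub[OF sp] sm by auto
      have "\<not> (Mx S u p sm > u p sm)" using mxrow[OF sm(1)] sm by simp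
      then have hsm: "uh p sm \<ge> u p sm - \<epsilon>" using G[OF smp, of p] by auto
      have hs: "uh p s \<le> u p s + \<epsilon>"
        using G[OF sp, of p] hsm sm rg[OF sm(1)] gam by auto
      show ?thesis using mxge[OF s'] sm hsm hs rg[OF sm(1)] by auto
    qed
    then show "s \<in> eqs S (2 * \<epsilon> + \<gamma>) u"
      unfolding eqs_def using sp reg_le_iff[of S, OF fin ne] by auto
  qed
  show ?thesis using part1 part2 by blast
qed

theorem theorem7:
  fixes M :: "'o measure"
    and S :: "'p::finite \<Rightarrow> 's set"
    and u :: "'p \<Rightarrow> ('p \<Rightarrow> 's) \<Rightarrow> real"
    and X :: "nat \<Rightarrow> 'p \<Rightarrow> ('p \<Rightarrow> 's) \<Rightarrow> 'o \<Rightarrow> real"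
    and Eb :: "nat \<Rightarrow> 'p \<Rightarrow> ('p \<Rightarrow> 's) \<Rightarrow> 'o \<Rightarrow> real"
    and a b :: "('p \<Rightarrow> 's) \<Rightarrow> real"
    and m :: "nat \<Rightarrow> nat" and T :: nat
    and \<delta> \<epsilon> gstar :: real
  assumes "prob_space M"
    and "\<And>p. finite (S p)" and "\<And>p. S p \<noteq> {}"
    and "\<And>k p s. s \<in> profiles S \<Longrightarrow> X k p s \<in> borel_measurable M"
    and "\<And>k p s \<omega>. s \<in> profiles S \<Longrightarrow> \<omega> \<in> space M \<Longrightarrow> a s \<le> X k p s \<omega> \<and> X k p s \<omega> \<le> b s"
    and "\<And>k p s. s \<in> profiles S \<Longrightarrow> integral\<^sup>L M (X k p s) = u p s"
    and "\<And>t. 1 \<le> t \<Longrightarrow> t \<le> T \<Longrightarrow> m t > 0"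
    and "0 < \<delta>" and "\<delta> < 1" and "0 < \<epsilon>" and "0 \<le> gstar"
    and "\<And>t p s. 1 \<le> t \<Longrightarrow> t \<le> T \<Longrightarrow> s \<in> profiles S \<Longrightarrow>
           {\<omega> \<in> space M. \<bar>u p s - (\<Sum>k<Msched m t. X k p s \<omega>) / real (Msched m t)\<bar> \<le> Eb t p s \<omega>}
             \<in> sets M
         \<and> measure M {\<omega> \<in> space M. \<bar>u p s - (\<Sum>k<Msched m t. X k p s \<omega>) / real (Msched m t)\<bar>
                                      \<le> Eb t p s \<omega>}
             \<ge> 1 - \<delta> / (real (card (indices S)) * real T)"
  shows "\<exists>A\<in>sets M. measure M A \<ge> 1 - \<delta> \<and>
           (\<forall>\<omega>\<in>A. \<forall>uh.
              psreg_plus S \<epsilon> gstar T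
                (\<lambda>t p s. (\<Sum>k<Msched m t. X k p s \<omega>) / real (Msched m t))
                (\<lambda>t p s. Eb t p s \<omega>) = Some uh \<longrightarrow>
              eqs S 0 u \<subseteq> eqs S (2 * \<epsilon>) uh \<and>
              (\<forall>\<gamma>. 0 \<le> \<gamma> \<and> \<gamma> \<le> gstar \<longrightarrow> eqs S \<gamma> uh \<subseteq> eqs S (2 * \<epsilon> + \<gamma>) u))"
  proof -
  interpret P: prob_space M by fact
  note fin = assms(2) and ne = assms(3)
  define Uw where "Uw \<omega> = (\<lambda>t p s. (\<Sum>k<Msched m t. X k p s \<omega>) / real (Msched m t))" for \<omega>
  define Gs where "Gs t p s = {\<omega> \<in> space M. \<bar>u p s - Uw \<omega> t p s\<bar> \<le> Eb t p s \<omega>}" for t p s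
  define I where "I = {1..T} \<times> indices S"
  define F where "F i = (case i of (t, p, s) \<Rightarrow> space M - Gs t p s)" for i
  define A where "A = space M - (\<Union>i\<in>I. F i)"
  have finI: "finite (indices S)"
    unfolding indices_def profiles_def using fin by (auto intro!: finite_PiE)
  have neI: "indices S \<noteq> {}"
    unfolding indices_def profiles_def using ne by (auto simp: PiE_eq_empty_iff)
  have Gs: "Gs t p s \<in> sets M \<and> measure M (Gs t p s) \<ge> 1 - \<delta> / (real (card (indices S)) * real T)"
    if "(t, p, s) \<in> I" for t p s
    using assms(12)[of t s p] that unfolding Gs_def Uw_def I_def indices_def by auto
  have Asets: "A \<in> sets M" unfolding A_def using Gs finI I_def by (auto intro!: sets.Diff sets.finite_UN simp: F_def)
  have "measure M (\<Union>i\<in>I. F i) \<le> (\<Sum>i\<in>I. measure M (F i))"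
  proof (rule measure_UNION_le)
    show "finite I" unfolding I_def using finI by simp
  next
    fix i assume "i \<in> I"
    then obtain t p s where "i = (t, p, s)" "(t, p, s) \<in> I" by (metis prod_cases3)
    then show "F i \<in> sets M" using Gs unfolding F_def by auto
  qed
  also have "\<dots> \<le> (\<Sum>(t, p, s)\<in>I. \<delta> / (real (card (indices S)) * real T))"
  proof (rule sum_mono)
    fix x assume "x \<in> I"
    then obtain t p s where x: "x = (t, p, s)" "(t, p, s) \<in> I" by (metis prod_cases3)
    show "measure M (F x)
          \<le> (case x of (t, p, s) \<Rightarrow> \<delta> / (real (card (indices S)) * real T))"
      unfolding F_def using Gs[OF x(2)] P.prob_compl[of "Gs t p s"] x by auto
  qed
  also have "\<dots> \<le> \<delta>"
  proof (cases "T = 0")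
    case True then show ?thesis using assms(8) by (simp add: I_def)
  next
    case False
    have "card I = T * card (indices S)" unfolding I_def by (simp add: card_cartesian_product)
    then show ?thesis using False finI neI by (simp add: case_prod_beta card_gt_0_iff)
  qed
  finally have ub: "measure M (\<Union>i\<in>I. F i) \<le> \<delta>" .
  have "measure M A = 1 - measure M (\<Union>i\<in>I. F i)"
    unfolding A_def using Gs finI I_def
    by (intro P.prob_compl) (auto intro!: sets.Diff sets.finite_UN simp: F_def)
  with ub have mA: "measure M A \<ge> 1 - \<delta>" by simp
  have det: "eqs S 0 u \<subseteq> eqs S (2 * \<epsilon>) uh \<and>
              (\<forall>\<gamma>. 0 \<le> \<gamma> \<and> \<gamma> \<le> gstar \<longrightarrow> eqs S \<gamma> uh \<subseteq> eqs S (2 * \<epsilon> + \<gamma>) u)"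
    if w: "\<omega> \<in> A" and out: "psreg_plus S \<epsilon> gstar T (Uw \<omega>) (\<lambda>t p s. Eb t p s \<omega>) = Some uh" for \<omega> uh
  proof -
    let ?st = "psreg_state S \<epsilon> gstar (Uw \<omega>) (\<lambda>t p s. Eb t p s \<omega>)"
    have good: "\<bar>u p s - Uw \<omega> t p s\<bar> \<le> Eb t p s \<omega>"
      if "1 \<le> t" "t \<le> T" "s \<in> profiles S" for t p s
      using w that unfolding A_def Gs_def I_def indices_def F_def by auto
    have ex: "\<exists>t\<in>{1..T}. fst (?st t) = {}" using out unfolding psreg_plus_def by (auto split: if_splits)
    define t0 where "t0 = (LEAST t. 1 \<le> t \<and> fst (?st t) = {})"
    have uh: "uh = fst (snd (?st t0))" using out ex unfolding psreg_plus_def t0_def by (auto split: if_splits)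
    obtain t1 where t1: "1 \<le> t1" "t1 \<le> T" "fst (?st t1) = {}" using ex by auto
    have t0: "1 \<le> t0 \<and> fst (?st t0) = {}" unfolding t0_def by (rule LeastI[of _ t1]) (use t1 in auto)
    have "t0 \<le> t1" unfolding t0_def by (rule Least_le) (use t1 in auto)
    then have t0T: "t0 \<le> T" using t1 by simp
    have gi: "goodidx S u \<epsilon> gstar uh (snd (snd (?st t0))) p s" if "s \<in> profiles S" for p s
      using psreg_inv[of S T u "Uw \<omega>" "\<lambda>t p s. Eb t p s \<omega>", OF fin ne good t0T that] t0 uh by auto
    show ?thesis using final_det[of S u \<epsilon> gstar uh, OF fin ne gi] assms(10,11) by auto
  qed
  show ?thesis
    using Asets mA det unfolding Uw_def by blast
qed

end
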